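(* Let $G$ be a finite group, $X=\{x_1,\dots,x_n\}$ with $n\ge2$, and fix a function $X\to G$ whose image generates $G$. Let $(\mathcal X_l)_{l\ge1}$ be a non-backtracking random walk on $(G,X)$ and $(\overline{\mathcal X}_l)$ its summed process. If $(\mathcal X_l)$ is aperiodic, then $\overline{\mathcal X}_l$ converges in distribution, as $l\to\infty$, to the uniform distribution on $G$. Otherwise there exists a subgroup $H\le G$ of index $2$ with $x_i\notin H$ for all $i$ such that $\overline{\mathcal X}_{2l}$ converges in distribution to the uniform distribution on $H$ and $\overline{\mathcal X}_{2l+1}$ converges in distribution to the uniform distribution on $G\setminus H$.
   Context: Let $G$ be a group, $X=\{x_1,\dots,x_n\}$ a set with $n\ge 2$, and fix a function $X\to G$; we identify each $x_i$ with its image in $G$. Let $\Omega=G\times\{\pm1,\pm2,\dots,\pm n\}$, with elements written $(g,\epsilon i)$, $g\in G$, $\epsilon=\pm1$, $i\in\{1,\dots,n\}$. A non-backtracking random walk on $(G,X)$ is a Markov chain $(\mathcal X_l)_{l\ge1}$ on $\Omega$ with transition probabilities $\mathbb P(\mathcal X_{l+1}=(g,\epsilon i)\mid \mathcal X_l=(h,\epsilon' j))=\alpha_{\epsilon' j,\epsilon i}$ if $g=hx_i^{\epsilon}$ and $\epsilon i\neq -\epsilon' j$, and $=0$ otherwise, where the $\alpha_{\epsilon' j,\epsilon i}$ are positive constants with $\sum_{\epsilon i\neq-\epsilon' j}\alpha_{\epsilon' j,\epsilon i}=1$ for each $\epsilon' j$; and with initial distribution $\mathbb P(\mathcal X_1=(g,\epsilon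 i))=\beta_{\epsilon i}$ if $g=x_i^{\epsilon}$ and $0$ otherwise, for positive constants $\beta_{\epsilon i}$ summing to $1$. Irreducibility and period refer to the Markov chain on the full state space $\Omega$. The summed process $\overline{\mathcal X}_l$ is the image of $\mathcal X_l$ under the projection $\Omega\to G$, i.e. $\mathbb P(\overline{\mathcal X}_l=g)=\sum_{\epsilon i}\mathbb P(\mathcal X_l=(g,\epsilon i))$. *)

theory Defs
  imports Complex_Main "HOL-Algebra.Algebra"
begin

text \<open>Signed indices: the set {+-1,...,+-n} is represented by nonzero integers e with |e| <= n.
  The element x_i^eps is nbw_gen G x e.\<close>

definition sidx :: "nat \<Rightarrow> int set" where
  "sidx n = {e. e \<noteq> 0 \<and> \<bar>e\<bar> \<le> int n}"

definition nbw_gen :: "('a, 'b) monoid_scheme \<Rightarrow> (nat \<Rightarrow> 'a) \<Rightarrow> int \<Rightarrow> 'a" where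
  "nbw_gen G x e = (if e > 0 then x (nat e) else inv\<^bsub>G\<^esub> (x (nat (- e))))"

definition nbw_states :: "('a, 'b) monoid_scheme \<Rightarrow> nat \<Rightarrow> ('a \<times> int) set" where
  "nbw_states G n = carrier G \<times> sidx n"

definition nbw_trans :: "('a, 'b) monoid_scheme \<Rightarrow> nat \<Rightarrow> (nat \<Rightarrow> 'a) \<Rightarrow> (int \<Rightarrow> int \<Rightarrow> real)
    \<Rightarrow> 'a \<times> int \<Rightarrow> 'a \<times> int \<Rightarrow> real" where
  "nbw_trans G n x \<alpha> s t =
     (if fst s \<in> carrier G \<and> snd s \<in> sidx n \<and> snd t \<in> sidx n \<and> snd t \<noteq> - snd s
         \<and> fst t = fst s \<otimes>\<^bsub>G\<^esub> nbw_gen G x (snd t)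
      then \<alpha> (snd s) (snd t) else 0)"

fun nbw_trans_pow :: "('a, 'b) monoid_scheme \<Rightarrow> nat \<Rightarrow> (nat \<Rightarrow> 'a) \<Rightarrow> (int \<Rightarrow> int \<Rightarrow> real)
    \<Rightarrow> nat \<Rightarrow> 'a \<times> int \<Rightarrow> 'a \<times> int \<Rightarrow> real" where
  "nbw_trans_pow G n x \<alpha> 0 s t = (if s = t then 1 else 0)"
| "nbw_trans_pow G n x \<alpha> (Suc l) s t =
     (\<Sum>u\<in>nbw_states G n. nbw_trans_pow G n x \<alpha> l s u * nbw_trans G n x \<alpha> u t)"

definition nbw_init :: "('a, 'b) monoid_scheme \<Rightarrow> nat \<Rightarrow> (nat \<Rightarrow> 'a) \<Rightarrow> (int \<Rightarrow> real) \<Rightarrow> 'a \<times> int \<Rightarrow> real" where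
  "nbw_init G n x \<beta> s = (if snd s \<in> sidx n \<and> fst s = nbw_gen G x (snd s) then \<beta> (snd s) else 0)"

definition nbw_dist :: "('a, 'b) monoid_scheme \<Rightarrow> nat \<Rightarrow> (nat \<Rightarrow> 'a) \<Rightarrow> (int \<Rightarrow> int \<Rightarrow> real)
    \<Rightarrow> (int \<Rightarrow> real) \<Rightarrow> nat \<Rightarrow> 'a \<times> int \<Rightarrow> real" where
  "nbw_dist G n x \<alpha> \<beta> l t =
     (\<Sum>s\<in>nbw_states G n. nbw_init G n x \<beta> s * nbw_trans_pow G n x \<alpha> (l - 1) s t)"

definition nbw_sum_dist :: "('a, 'b) monoid_scheme \<Rightarrow> nat \<Rightarrow> (nat \<Rightarrow> 'a) \<Rightarrow> (int \<Rightarrow> int \<Rightarrow> real)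
    \<Rightarrow> (int \<Rightarrow> real) \<Rightarrow> nat \<Rightarrow> 'a \<Rightarrow> real" where
  "nbw_sum_dist G n x \<alpha> \<beta> l g = (\<Sum>e\<in>sidx n. nbw_dist G n x \<alpha> \<beta> l (g, e))"

definition nbw_period :: "('a, 'b) monoid_scheme \<Rightarrow> nat \<Rightarrow> (nat \<Rightarrow> 'a) \<Rightarrow> (int \<Rightarrow> int \<Rightarrow> real)
    \<Rightarrow> 'a \<times> int \<Rightarrow> nat" where
  "nbw_period G n x \<alpha> s = Gcd {l. l \<ge> 1 \<and> nbw_trans_pow G n x \<alpha> l s s > 0}"

definition nbw_aperiodic :: "('a, 'b) monoid_scheme \<Rightarrow> nat \<Rightarrow> (nat \<Rightarrow> 'a) \<Rightarrow> (int \<Rightarrow> int \<Rightarrow> real) \<Rightarrow> bool" where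
  "nbw_aperiodic G n x \<alpha> = (\<forall>s\<in>nbw_states G n. nbw_period G n x \<alpha> s = 1)"

end

theory Submission
  imports Defs "HOL-Number_Theory.Cong"
begin



lemma numsemi_mult:
  fixes S :: "nat set"
  assumes add: "\<forall>x\<in>S. \<forall>y\<in>S. x+y \<in> S" and xS: "x \<in> S" and k: "k \<ge> 1"
  shows "k * x \<in> S"
  using k
proof (induction k)
  case 0 then show ?case by simp
next
  case (Suc k)
  show ?case
  proof (cases "k = 0")
    case True then show ?thesis using xS by simp
  next
    case False
    then have "k * x \<in> S" using Suc by simp
    then show ?thesis using add xS by (metis add.commute mult_Suc)
  qed
qed

lemma numsemi:
  fixes S :: "nat set"
  assumes ne: "S \<noteq> {}" and pos: "\<forall>x\<in>S. x > 0" and add: "\<forall>x\<in>S. \<forall>y\<in>S. x+y \<in> S"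
  shows "\<exists>d>0. (\<forall>x\<in>S. d dvd x) \<and> (\<exists>N. \<forall>k\<ge>N. k*d \<in> S)"
proof -
  define S0 where "S0 = insert 0 S"
  have add0: "x + y \<in> S0" if "x \<in> S0" "y \<in> S0" for x y
    using that add unfolding S0_def by auto
  have addS: "x + y \<in> S" if "x \<in> S" "y \<in> S0" for x y
    using that add unfolding S0_def by auto
  have mult0: "k * x \<in> S0" if "x \<in> S0" for k x
  proof (cases "k = 0 \<or> x = 0")
    case True then show ?thesis unfolding S0_def by auto
  next
    case False
    then have "x \<in> S" using that unfolding S0_def by auto
    then show ?thesis using numsemi_mult[OF add, of x k] False unfolding S0_def by auto
  qed
  define P where "P z \<longleftrightarrow> (\<exists>p q. p \<in> S0 \<and> q \<in> S0 \<and> q < p \<and> z = p - q)" for z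
  obtain s where sS: "s \<in> S" using ne by auto
  have "P s" unfolding P_def S0_def using sS pos by (intro exI[of _ s] exI[of _ 0]) auto
  define d where "d = (LEAST z. P z)"
  have Pd: "P d" unfolding d_def by (rule LeastI[of P s]) fact
  have dmin: "d \<le> z" if "P z" for z unfolding d_def using that by (rule Least_le)
  obtain p q where pq: "p \<in> S0" "q \<in> S0" "q < p" "d = p - q" using Pd unfolding P_def by auto
  have dpos: "d > 0" using pq by simp
  have pqd: "p = q + d" using pq by simp
  have dvd: "d dvd y" if yS: "y \<in> S" for y
  proof (rule ccontr)
    assume nd: "\<not> d dvd y"
    define k where "k = y div d"
    define r where "r = y mod d"
    have r0: "r > 0" using nd unfolding r_def by (simp add: dvd_eq_mod_eq_0)
    have rd: "r < d" unfolding r_def using dpos by simp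
    have yeq: "y = k * d + r" unfolding k_def r_def by simp
    have e: "y + k * q = k * p + r" using yeq pqd by (simp add: algebra_simps)
    have y0: "y \<in> S0" using yS unfolding S0_def by auto
    have m1: "y + k*q \<in> S0" using add0[OF y0 mult0[OF pq(2)]] .
    have m2: "k*p \<in> S0" using mult0[OF pq(1)] .
    have "P r"
      unfolding P_def
      apply (rule exI[of _ "y + k*q"], rule exI[of _ "k*p"])
      using e r0 m1 m2 by auto
    then show False using dmin rd by fastforce
  qed
  have large: "\<exists>N. \<forall>k\<ge>N. k*d \<in> S"
  proof (cases "q = 0")
    case True
    then have "d \<in> S" using pq pos unfolding S0_def by auto
    then show ?thesis using numsemi_mult[OF add] by (intro exI[of _ 1]) auto
  next
    case False
    then have qS: "q \<in> S" using pq unfolding S0_def by auto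
    obtain b where b: "q = b * d" using dvd[OF qS] by (metis dvdE mult.commute)
    have b1: "b \<ge> 1" using False b by (cases b) auto
    have "\<forall>k\<ge>b*b. k*d \<in> S"
    proof (intro allI impI)
      fix k assume kb: "k \<ge> b * b"
      define a where "a = k div b"
      define r where "r = k mod b"
      have rb: "r < b" unfolding r_def using b1 by simp
      have keq: "k = a * b + r" unfolding a_def r_def by simp
      have ab: "a \<ge> b"
      proof (rule ccontr)
        assume "\<not> a \<ge> b"
        then have "a + 1 \<le> b" by simp
        then have "(a+1) * b \<le> b * b" by (rule mult_right_mono) simp
        then show False using keq rb kb by (simp add: algebra_simps)
      qed
      have e: "k * d = (a - r) * q + r * p"
      proof -
        have "k * d = a * q + r * d" using keq b by (simp add: algebra_simps)
        also have "\<dots> = (a - r) * q + r * q + r * d" using ab rb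
          by (metis add_mult_distrib le_add_diff_inverse2 less_imp_le_nat order.strict_trans2 ab)
        also have "\<dots> = (a - r) * q + r * p" using pqd by (simp add: algebra_simps)
        finally show ?thesis .
      qed
      have "(a - r) * q \<in> S" using numsemi_mult[OF add qS] ab rb by simp
      moreover have "r * p \<in> S0" using mult0 pq by simp
      ultimately show "k * d \<in> S" using e addS by simp
    qed
    then show ?thesis by blast
  qed
  show ?thesis using dpos dvd large by blast
qed

locale reach_sys =
  fixes S :: "'s set" and R :: "nat \<Rightarrow> 's \<Rightarrow> 's \<Rightarrow> bool" and s0 :: 's
  assumes fin: "finite S" and s0: "s0 \<in> S"
    and R0: "\<And>s. s \<in> S \<Longrightarrow> R 0 s s"
    and Rtrans: "\<And>a b s u t. R a s u \<Longrightarrow> R b u t \<Longrightarrow> s \<in> S \<Longrightarrow> u \<in> S \<Longrightarrow> t \<in> S \<Longrightarrow> R (a+b) s t"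
    and irr: "\<And>s t. s \<in> S \<Longrightarrow> t \<in> S \<Longrightarrow> \<exists>l. R l s t"
    and ret: "\<exists>l>0. R l s0 s0"
begin

theorem periodic_structure:
  "\<exists>d>0. \<exists>\<kappa> M. (\<forall>s\<in>S. \<forall>t\<in>S. \<forall>l. R l s t \<longrightarrow> [\<kappa> s + l = \<kappa> t] (mod d))
      \<and> (\<forall>s\<in>S. \<forall>t\<in>S. \<forall>l\<ge>M. [\<kappa> s + l = \<kappa> t] (mod d) \<longrightarrow> R l s t)"
proof -
  define RS where "RS = {l. l > 0 \<and> R l s0 s0}"
  have "RS \<noteq> {}" using ret unfolding RS_def by auto
  moreover have "\<forall>x\<in>RS. x > 0" unfolding RS_def by auto
  moreover have "\<forall>x\<in>RS. \<forall>y\<in>RS. x+y \<in> RS" unfolding RS_def using Rtrans s0 by auto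
  ultimately obtain d N where d: "d > 0" "\<forall>x\<in>RS. d dvd x" "\<forall>k\<ge>N. k*d \<in> RS"
    using numsemi[of RS] by blast
  define \<kappa> where "\<kappa> t = (SOME a. R a s0 t)" for t
  define c where "c t = (SOME b. R b t s0)" for t
  have \<kappa>: "R (\<kappa> t) s0 t" if "t \<in> S" for t
    unfolding \<kappa>_def using irr[OF s0 that] by (rule someI_ex)
  have c: "R (c t) t s0" if "t \<in> S" for t
    unfolding c_def using irr[OF that s0] by (rule someI_ex)
  have cyc: "d dvd a + b" if "R a s0 t" "R b t s0" "t \<in> S" for a b t
  proof (cases "a + b = 0")
    case True then show ?thesis by simp
  next
    case False
    then have "a + b \<in> RS" unfolding RS_def using Rtrans[OF that(1,2) s0 that(3) s0] by simp
    then show ?thesis using d by auto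
  qed
  have P1: "[\<kappa> s + l = \<kappa> t] (mod d)" if "s \<in> S" "t \<in> S" "R l s t" for s t l
  proof -
    have "R (\<kappa> s + l) s0 t" using Rtrans[OF \<kappa>[OF that(1)] that(3) s0 that(1,2)] .
    then have "d dvd \<kappa> s + l + c t" using cyc c that by blast
    moreover have "d dvd \<kappa> t + c t" using cyc c \<kappa> that by blast
    ultimately have "[\<kappa> s + l + c t = \<kappa> t + c t] (mod d)"
      by (metis cong_0_iff cong_sym cong_trans)
    then show ?thesis by (simp add: cong_add_rcancel_nat)
  qed
  define M where "M = Max (c ` S) + Max (\<kappa> ` S) + N * d"
  have P2: "R l s t" if st: "s \<in> S" "t \<in> S" and lM: "l \<ge> M" and cg: "[\<kappa> s + l = \<kappa> t] (mod d)" for s t l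
  proof -
    have cs: "c s \<le> Max (c ` S)" using fin st by simp
    have kt: "\<kappa> t \<le> Max (\<kappa> ` S)" using fin st by simp
    define L where "L = l - (c s + \<kappa> t)"
    have lL: "l = c s + L + \<kappa> t" unfolding L_def using lM cs kt unfolding M_def by simp
    have LN: "L \<ge> N * d" unfolding L_def using lM cs kt unfolding M_def by simp
    have X0: "[\<kappa> s + c s = 0] (mod d)" using cyc[OF \<kappa>[OF st(1)] c[OF st(1)] st(1)] by (simp add: cong_0_iff)
    have "[(\<kappa> s + c s + L) + \<kappa> t = 0 + \<kappa> t] (mod d)" using cg lL by (simp add: algebra_simps)
    then have "[\<kappa> s + c s + L = 0] (mod d)" by (simp only: cong_add_rcancel_nat)
    then have "[(\<kappa> s + c s) + L = (\<kappa> s + c s) + 0] (mod d)"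
      using X0 by (metis add_0_right cong_sym cong_trans)
    then have "[L = 0] (mod d)" by (simp only: cong_add_lcancel_nat)
    then obtain k where k: "L = d * k" by (auto simp: cong_0_iff elim: dvdE)
    have "k \<ge> N" using LN k d(1) by (simp add: mult.commute)
    then have RL: "R L s0 s0"
    proof (cases "L = 0")
      case True then show ?thesis using R0 s0 by simp
    next
      case False
      have "k * d \<in> RS" using d \<open>k \<ge> N\<close> by auto
      then show ?thesis using k unfolding RS_def by (simp add: mult.commute)
    qed
    have "R (c s + L) s s0" using Rtrans[OF c[OF st(1)] RL st(1) s0 s0] .
    from Rtrans[OF this \<kappa>[OF st(2)] st(1) s0 st(2)] show ?thesis using lL by simp
  qed
  show ?thesis using d(1) P1 P2 by blast
qed
end



locale nbw = group +
  fixes n :: nat and xg :: "nat \<Rightarrow> 'a" and \<alpha> :: "int \<Rightarrow> int \<Rightarrow> real" and \<beta> :: "int \<Rightarrow> real"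
  assumes fin: "finite (carrier G)"
    and n2: "n \<ge> 2"
    and xG: "\<And>i. i \<in> {1..n} \<Longrightarrow> xg i \<in> carrier G"
    and gen: "generate G (xg ` {1..n}) = carrier G"
    and \<alpha>_pos: "\<And>e' e. e' \<in> sidx n \<Longrightarrow> e \<in> sidx n \<Longrightarrow> e \<noteq> - e' \<Longrightarrow> \<alpha> e' e > 0"
    and \<alpha>_sum: "\<And>e'. e' \<in> sidx n \<Longrightarrow> (\<Sum>e\<in>sidx n - {- e'}. \<alpha> e' e) = 1"
    and \<beta>_pos: "\<And>e. e \<in> sidx n \<Longrightarrow> \<beta> e > 0"
    and \<beta>_sum: "(\<Sum>e\<in>sidx n. \<beta> e) = 1"
begin

abbreviation "\<Omega> \<equiv> nbw_states G n"
abbreviation "Pt \<equiv> nbw_trans G n xg \<alpha>"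
abbreviation "Pw \<equiv> nbw_trans_pow G n xg \<alpha>"
abbreviation "gn \<equiv> nbw_gen G xg"

lemma sidx_fin: "finite (sidx n)"
proof -
  have "sidx n \<subseteq> {- int n..int n}" unfolding sidx_def by auto
  then show ?thesis by (rule finite_subset) simp
qed

lemma Omega_fin: "finite \<Omega>"
  unfolding nbw_states_def using fin sidx_fin by simp

lemma mem_Omega[simp]: "(g, e) \<in> \<Omega> \<longleftrightarrow> g \<in> carrier G \<and> e \<in> sidx n"
  unfolding nbw_states_def by simp

lemma sidx_neg: "e \<in> sidx n \<Longrightarrow> - e \<in> sidx n"
  unfolding sidx_def by auto

lemma sidx_nz: "e \<in> sidx n \<Longrightarrow> e \<noteq> 0"
  unfolding sidx_def by auto

lemma sidx_int: "k \<in> {1..n} \<Longrightarrow> int k \<in> sidx n"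
  unfolding sidx_def by auto

lemma gen_carrier: assumes e: "e \<in> sidx n" shows "gn e \<in> carrier G"
proof (cases "0 < e")
  case True
  then have "nat e \<in> {1..n}" using e unfolding sidx_def by auto
  then show ?thesis using True xG unfolding nbw_gen_def by auto
next
  case False
  then have "nat (- e) \<in> {1..n}" using e unfolding sidx_def by auto
  then show ?thesis using False xG unfolding nbw_gen_def by auto
qed

lemma pow1: "y \<in> carrier G \<Longrightarrow> y [^] (1::nat) = y"
  by (metis One_nat_def nat_pow_Suc nat_pow_0 l_one)

lemma gen_pos: "k > 0 \<Longrightarrow> gn (int k) = xg k"
  unfolding nbw_gen_def by simp

lemma gen_neg: "k > 0 \<Longrightarrow> gn (- int k) = inv (xg k)"
  unfolding nbw_gen_def by simp

lemma X_carrier: "xg ` {1..n} \<subseteq> carrier G" using xG by auto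

lemma carrier_ne: "carrier G \<noteq> {}" by auto

lemma Pt_nonneg: "0 \<le> Pt s t"
  unfolding nbw_trans_def using \<alpha>_pos by (auto intro: less_imp_le)

lemma Pt_nz: "Pt s t \<noteq> 0 \<Longrightarrow> fst s \<in> carrier G \<and> snd s \<in> sidx n \<and> snd t \<in> sidx n \<and> snd t \<noteq> - snd s
   \<and> fst t = fst s \<otimes> gn (snd t)"
  unfolding nbw_trans_def by (auto split: if_splits)

lemma Pt_edge: "h \<in> carrier G \<Longrightarrow> e' \<in> sidx n \<Longrightarrow> e \<in> sidx n \<Longrightarrow> e \<noteq> - e'
   \<Longrightarrow> Pt (h, e') (h \<otimes> gn e, e) = \<alpha> e' e"
  unfolding nbw_trans_def by simp

lemma Pw_nonneg: "0 \<le> Pw l s t"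
  by (induction l arbitrary: t) (auto intro!: sum_nonneg mult_nonneg_nonneg Pt_nonneg)

lemma Pt_rowsum: assumes s: "s \<in> \<Omega>" shows "(\<Sum>t\<in>\<Omega>. Pt s t) = 1"
proof -
  obtain h e' where he: "s = (h, e')" by (cases s)
  have h: "h \<in> carrier G" and e': "e' \<in> sidx n" using s he by auto
  have inner: "(\<Sum>g\<in>carrier G. Pt (h,e') (g,e)) = (if e \<noteq> - e' then \<alpha> e' e else 0)"
    if e: "e \<in> sidx n" for e
  proof -
    have "(\<Sum>g\<in>carrier G. Pt (h,e') (g,e))
        = (\<Sum>g\<in>carrier G. if g = h \<otimes> gn e then (if e \<noteq> - e' then \<alpha> e' e else 0) else 0)"
      by (rule sum.cong) (auto simp: nbw_trans_def h e e')
    also have "\<dots> = (if e \<noteq> - e' then \<alpha> e' e else 0)"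
      using h gen_carrier[OF e] by (simp add: sum.delta[OF fin])
    finally show ?thesis .
  qed
  have "(\<Sum>t\<in>\<Omega>. Pt s t) = (\<Sum>g\<in>carrier G. \<Sum>e\<in>sidx n. Pt (h,e') (g,e))"
    unfolding nbw_states_def he by (simp add: sum.cartesian_product)
  also have "\<dots> = (\<Sum>e\<in>sidx n. \<Sum>g\<in>carrier G. Pt (h,e') (g,e))" by (rule sum.swap)
  also have "\<dots> = (\<Sum>e\<in>sidx n. if e \<noteq> - e' then \<alpha> e' e else 0)"
    by (rule sum.cong) (auto simp: inner)
  also have "\<dots> = (\<Sum>e\<in>{e\<in>sidx n. e \<noteq> - e'}. \<alpha> e' e)"
    by (simp add: sum.inter_filter[OF sidx_fin])
  also have "{e\<in>sidx n. e \<noteq> - e'} = sidx n - {- e'}" by auto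
  finally show ?thesis using \<alpha>_sum[OF e'] by simp
qed

lemma Pw_rowsum: "s \<in> \<Omega> \<Longrightarrow> (\<Sum>t\<in>\<Omega>. Pw l s t) = 1"
proof (induction l)
  case 0
  then show ?case using Omega_fin by (simp add: sum.delta)
next
  case (Suc l)
  have "(\<Sum>t\<in>\<Omega>. Pw (Suc l) s t) = (\<Sum>t\<in>\<Omega>. \<Sum>u\<in>\<Omega>. Pw l s u * Pt u t)" by simp
  also have "\<dots> = (\<Sum>u\<in>\<Omega>. \<Sum>t\<in>\<Omega>. Pw l s u * Pt u t)" by (rule sum.swap)
  also have "\<dots> = (\<Sum>u\<in>\<Omega>. Pw l s u * (\<Sum>t\<in>\<Omega>. Pt u t))" by (simp add: sum_distrib_left)
  also have "\<dots> = (\<Sum>u\<in>\<Omega>. Pw l s u)" by (rule sum.cong) (auto simp: Pt_rowsum)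
  finally show ?case using Suc by simp
qed

lemma Pw_one: "s \<in> \<Omega> \<Longrightarrow> Pw 1 s t = Pt s t"
proof -
  assume s: "s \<in> \<Omega>"
  have "Pw 1 s t = (\<Sum>u\<in>\<Omega>. (if s = u then 1 else 0) * Pt u t)" by simp
  also have "\<dots> = (\<Sum>u\<in>\<Omega>. if s = u then Pt u t else 0)" by (rule sum.cong) auto
  finally have "Pw 1 s t = (\<Sum>u\<in>\<Omega>. if s = u then Pt u t else 0)" .
  then show ?thesis using s Omega_fin by (simp add: sum.delta)
qed

lemma CK: "t \<in> \<Omega> \<Longrightarrow> Pw (a + b) s t = (\<Sum>u\<in>\<Omega>. Pw a s u * Pw b u t)"
proof (induction b arbitrary: t)
  case 0
  have "(\<Sum>u\<in>\<Omega>. Pw a s u * Pw 0 u t) = (\<Sum>u\<in>\<Omega>. if t = u then Pw a s u else 0)"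
    by (rule sum.cong) auto
  then show ?case using 0 Omega_fin by (simp add: sum.delta)
next
  case (Suc b)
  have "Pw (a + Suc b) s t = (\<Sum>w\<in>\<Omega>. Pw (a + b) s w * Pt w t)" by simp
  also have "\<dots> = (\<Sum>w\<in>\<Omega>. (\<Sum>u\<in>\<Omega>. Pw a s u * Pw b u w) * Pt w t)"
    by (rule sum.cong) (auto simp: Suc.IH)
  also have "\<dots> = (\<Sum>w\<in>\<Omega>. \<Sum>u\<in>\<Omega>. Pw a s u * (Pw b u w * Pt w t))"
    by (simp add: sum_distrib_right mult.assoc)
  also have "\<dots> = (\<Sum>u\<in>\<Omega>. \<Sum>w\<in>\<Omega>. Pw a s u * (Pw b u w * Pt w t))" by (rule sum.swap)
  also have "\<dots> = (\<Sum>u\<in>\<Omega>. Pw a s u * Pw (Suc b) u t)" by (simp add: sum_distrib_left)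
  finally show ?case .
qed

definition rch :: "nat \<Rightarrow> 'a \<times> int \<Rightarrow> 'a \<times> int \<Rightarrow> bool" where
  "rch l s t \<longleftrightarrow> 0 < Pw l s t"

lemma rch0: "rch 0 s s" unfolding rch_def by simp

lemma rch_trans: assumes "rch a s u" "rch b u t" "u \<in> \<Omega>" "t \<in> \<Omega>" shows "rch (a+b) s t"
proof -
  have "Pw a s u * Pw b u t \<le> (\<Sum>u\<in>\<Omega>. Pw a s u * Pw b u t)"
    by (rule member_le_sum) (auto intro: assms mult_nonneg_nonneg Pw_nonneg Omega_fin)
  moreover have "0 < Pw a s u * Pw b u t" using assms unfolding rch_def by simp
  ultimately show ?thesis unfolding rch_def using CK[OF assms(4)] by simp
qed

lemma rch_edge: "h \<in> carrier G \<Longrightarrow> e' \<in> sidx n \<Longrightarrow> e \<in> sidx n \<Longrightarrow> e \<noteq> - e'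
   \<Longrightarrow> rch 1 (h, e') (h \<otimes> gn e, e)"
  unfolding rch_def by (subst Pw_one) (simp_all add: Pt_edge \<alpha>_pos)

lemma rep: assumes g: "g \<in> carrier G" and e: "e \<in> sidx n" and f: "f \<in> sidx n" and fe: "f \<noteq> - e"
  shows "rch (Suc k) (g, e) (g \<otimes> gn f [^] Suc k, f)"
proof (induction k)
  case 0
  show ?case using rch_edge[OF g e f fe] gen_carrier[OF f] by simp
next
  case (Suc k)
  have c: "g \<otimes> gn f [^] Suc k \<in> carrier G" using g gen_carrier[OF f] by simp
  have ff: "f \<noteq> - f" using sidx_nz[OF f] by simp
  have "rch 1 (g \<otimes> gn f [^] Suc k, f) (g \<otimes> gn f [^] Suc k \<otimes> gn f, f)"
    by (rule rch_edge[OF c f f ff])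
  moreover have "g \<otimes> gn f [^] Suc k \<otimes> gn f = g \<otimes> gn f [^] Suc (Suc k)"
    using g gen_carrier[OF f] by (simp add: m_assoc)
  ultimately have "rch 1 (g \<otimes> gn f [^] Suc k, f) (g \<otimes> gn f [^] Suc (Suc k), f)" by simp
  from rch_trans[OF Suc this] show ?case using c f g gen_carrier[OF f] by simp
qed

abbreviation "N \<equiv> order G"

lemma N_pos: "N > 0" using fin order_gt_0_iff_finite by simp

lemma pow_N: "y \<in> carrier G \<Longrightarrow> y [^] N = \<one>" by (rule pow_order_eq_1)

lemma pow_inv: assumes y: "y \<in> carrier G" shows "y [^] (2 * N - 1) = inv y"
proof -
  have "y [^] (2 * N - 1) \<otimes> y = y [^] (2 * N - 1 + 1)" using y nat_pow_mult[OF y, of _ 1] by simp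
  also have "2 * N - 1 + 1 = N * 2" using N_pos by simp
  also have "y [^] (N * 2) = \<one>" using y by (simp add: nat_pow_pow[symmetric] pow_N)
  finally show ?thesis using y by (intro inv_equality[symmetric]) auto
qed

lemma rep_N: assumes g: "g \<in> carrier G" and e: "e \<in> sidx n" and f: "f \<in> sidx n" and fe: "f \<noteq> - e"
  shows "rch N (g, e) (g, f)"
proof -
  obtain k where k: "N = Suc k" using N_pos by (cases N) auto
  have "rch (Suc k) (g, e) (g \<otimes> gn f [^] Suc k, f)" by (rule rep[OF g e f fe])
  then show ?thesis using k g gen_carrier[OF f] by (metis pow_N r_one)
qed

lemma same_sign1: assumes f: "f \<in> sidx n" and l: "l \<in> sidx n" and sg: "(0 < f) = (0 < l)"
  and h: "h \<in> carrier G" and r: "(r::nat) \<ge> 1"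
  shows "\<exists>k. rch k (h, f) (h \<otimes> gn l [^] r, f)"
proof -
  have lf: "l \<noteq> - f" using sg sidx_nz[OF f] sidx_nz[OF l] by auto
  obtain r' where r': "r = Suc r'" using r by (cases r) auto
  have A: "rch r (h, f) (h \<otimes> gn l [^] r, l)" using rep[OF h f l lf] r' by simp
  have c: "h \<otimes> gn l [^] r \<in> carrier G" using h gen_carrier[OF l] by simp
  have B: "rch N (h \<otimes> gn l [^] r, l) (h \<otimes> gn l [^] r, f)"
    by (rule rep_N[OF c l f]) (use lf in auto)
  show ?thesis using rch_trans[OF A B] c f l by auto
qed

lemma gen_reach: assumes f: "f \<in> sidx n" and b: "b \<in> generate G (xg ` {1..n})"
  shows "\<forall>h\<in>carrier G. \<exists>k. rch k (h, f) (h \<otimes> b, f)"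
  using b
proof (induction rule: generate.induct)
  case one
  then show ?case using rch0 by auto
next
  case (incl y)
  then obtain k where k: "k \<in> {1..n}" "y = xg k" by auto
  show ?case
  proof
    fix h assume h: "h \<in> carrier G"
    show "\<exists>j. rch j (h, f) (h \<otimes> y, f)"
    proof (cases "0 < f")
      case True
      have "int k \<in> sidx n" using sidx_int[OF k(1)] .
      from same_sign1[OF f this _ h, of 1] True k show ?thesis using gen_pos[of k] pow1[OF xG[OF k(1)]] by auto
    next
      case False
      have s: "- int k \<in> sidx n" using sidx_neg[OF sidx_int[OF k(1)]] .
      have "(0 < f) = (0 < - int k)" using False k by auto
      from same_sign1[OF f s this h, of "2 * N - 1"] N_pos k False
      show ?thesis using gen_neg[of k] pow_inv[of "inv (xg k)"] xG[OF k(1)] by auto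
    qed
  qed
next
  case (inv y)
  then obtain k where k: "k \<in> {1..n}" "y = xg k" by auto
  show ?case
  proof
    fix h assume h: "h \<in> carrier G"
    show "\<exists>j. rch j (h, f) (h \<otimes> inv y, f)"
    proof (cases "0 < f")
      case True
      have "int k \<in> sidx n" using sidx_int[OF k(1)] .
      from same_sign1[OF f this _ h, of "2 * N - 1"] True k N_pos
      show ?thesis using gen_pos[of k] pow_inv[of "xg k"] xG[OF k(1)] by auto
    next
      case False
      have s: "- int k \<in> sidx n" using sidx_neg[OF sidx_int[OF k(1)]] .
      have "(0 < f) = (0 < - int k)" using False k by auto
      from same_sign1[OF f s this h, of 1] k False
      show ?thesis using gen_neg[of k] pow1[OF inv_closed[OF xG[OF k(1)]]] by auto
    qed
  qed
next
  case (eng h1 h2)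
  have c1: "h1 \<in> carrier G" and c2: "h2 \<in> carrier G"
    using eng.hyps generate_in_carrier[OF X_carrier] by auto
  show ?case
  proof
    fix h assume h: "h \<in> carrier G"
    obtain k1 where k1: "rch k1 (h, f) (h \<otimes> h1, f)" using eng.IH(1) h by auto
    obtain k2 where k2: "rch k2 (h \<otimes> h1, f) (h \<otimes> h1 \<otimes> h2, f)" using eng.IH(2) h c1 by auto
    have "rch (k1 + k2) (h, f) (h \<otimes> h1 \<otimes> h2, f)"
      by (rule rch_trans[OF k1 k2]) (use h c1 c2 f in auto)
    then show "\<exists>k. rch k (h, f) (h \<otimes> (h1 \<otimes> h2), f)" using h c1 c2 by (auto simp: m_assoc)
  qed
qed

lemma same_sign: assumes f: "f \<in> sidx n" and f': "f' \<in> sidx n" and sg: "(0 < f) = (0 < f')"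
  and h: "h \<in> carrier G" and g: "g \<in> carrier G"
  shows "\<exists>k. rch k (h, f) (g, f')"
proof -
  have "inv h \<otimes> g \<in> generate G (xg ` {1..n})" using gen h g by auto
  then obtain k where k: "rch k (h, f) (h \<otimes> (inv h \<otimes> g), f)" using gen_reach[OF f] h by auto
  have k': "rch k (h, f) (g, f)" using k h g by (simp add: m_assoc[symmetric])
  have ff: "f' \<noteq> - f" using sg sidx_nz[OF f] sidx_nz[OF f'] by auto
  have "rch N (g, f) (g, f')" by (rule rep_N[OF g f f' ff])
  from rch_trans[OF k' this] show ?thesis using g f f' by auto
qed

lemma irreducible: assumes s: "s \<in> \<Omega>" and t: "t \<in> \<Omega>" shows "\<exists>k. rch k s t"
proof -
  obtain h f where hf: "s = (h, f)" by (cases s)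
  obtain g f' where gf: "t = (g, f')" by (cases t)
  have h: "h \<in> carrier G" and f: "f \<in> sidx n" using s hf by auto
  have g: "g \<in> carrier G" and f': "f' \<in> sidx n" using t gf by auto
  show ?thesis
  proof (cases "(0 < f) = (0 < f')")
    case True
    then show ?thesis using same_sign[OF f f' True h g] hf gf by simp
  next
    case False
    define k :: int where "k = (if f = 1 \<or> f = -1 then 2 else 1)"
    define l where "l = (if 0 < f' then k else - k)"
    have l: "l \<in> sidx n" unfolding l_def k_def sidx_def using n2 by auto
    have lf: "l \<noteq> - f" unfolding l_def k_def using False sidx_nz[OF f] by auto
    have sl: "(0 < l) = (0 < f')" unfolding l_def k_def by auto
    have c: "h \<otimes> gn l \<in> carrier G" using h gen_carrier[OF l] by simp
    have A: "rch 1 (h, f) (h \<otimes> gn l, l)" by (rule rch_edge[OF h f l lf])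
    obtain j where B: "rch j (h \<otimes> gn l, l) (g, f')" using same_sign[OF l f' sl c g] by auto
    from rch_trans[OF A B] show ?thesis using c l g f' hf gf by auto
  qed
qed

lemma one_sidx: "(1::int) \<in> sidx n" using n2 unfolding sidx_def by simp

lemma s0_Omega: "(\<one>, 1) \<in> \<Omega>" using one_sidx by auto

lemma ret: "\<exists>l>0. rch l (\<one>, 1) (\<one>, 1)"
  using rep_N[of \<one> 1 1] one_sidx N_pos by auto

lemma reach_sys: "reach_sys \<Omega> rch (\<one>, 1)"
  by (unfold_locales) (auto intro: Omega_fin s0_Omega rch0 rch_trans irreducible ret simp: one_sidx)

end



context nbw
begin

lemma common_succ: assumes e1: "e1 \<in> sidx n" and e2: "e2 \<in> sidx n"
  obtains e where "e \<in> sidx n" "e \<noteq> - e1" "e \<noteq> - e2"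
proof -
  have s1: "(1::int) \<in> sidx n" and s2: "(2::int) \<in> sidx n" and s3: "(-1::int) \<in> sidx n"
    using n2 unfolding sidx_def by auto
  show ?thesis
  proof (cases "1 \<noteq> - e1 \<and> 1 \<noteq> - e2")
    case True then show ?thesis using that s1 by blast
  next
    case F1: False
    show ?thesis
    proof (cases "2 \<noteq> - e1 \<and> 2 \<noteq> - e2")
      case True then show ?thesis using that s2 by blast
    next
      case False
      then have "-1 \<noteq> - e1 \<and> -1 \<noteq> - e2" using F1 by auto
      then show ?thesis using that s3 by blast
    qed
  qed
qed

lemma gn_parity_base: "k \<in> {1..n} \<Longrightarrow> gn (int k) = xg k \<and> gn (- int k) = inv (xg k)"
  using gen_pos gen_neg by auto

theorem dichotomy:
  "(\<exists>M. \<forall>s\<in>\<Omega>. \<forall>t\<in>\<Omega>. \<forall>l\<ge>M. rch l s t)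
   \<or> (\<exists>p. (\<forall>a\<in>carrier G. \<forall>b\<in>carrier G. p (a \<otimes> b) = (p a \<noteq> p b)) \<and> \<not> p \<one>
        \<and> (\<forall>i\<in>{1..n}. p (xg i))
        \<and> (\<exists>M. \<forall>s\<in>\<Omega>. \<forall>t\<in>\<Omega>. \<forall>l\<ge>M. even l \<and> p (fst s) = p (fst t) \<longrightarrow> rch l s t))"
proof -
  interpret R: reach_sys \<Omega> rch "(\<one>, 1)" by (rule reach_sys)
  obtain d \<kappa> M where d: "d > 0"
    and P1: "\<And>s t l. s\<in>\<Omega> \<Longrightarrow> t\<in>\<Omega> \<Longrightarrow> rch l s t \<Longrightarrow> [\<kappa> s + l = \<kappa> t] (mod d)"
    and P2: "\<And>s t l. s\<in>\<Omega> \<Longrightarrow> t\<in>\<Omega> \<Longrightarrow> l \<ge> M \<Longrightarrow> [\<kappa> s + l = \<kappa> t] (mod d) \<Longrightarrow> rch l s t"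
    using R.periodic_structure by blast
  have edge: "[\<kappa> (h, e') + 1 = \<kappa> (h \<otimes> gn e, e)] (mod d)"
    if "h \<in> carrier G" "e' \<in> sidx n" "e \<in> sidx n" "e \<noteq> - e'" for h e' e
    using P1[OF _ _ rch_edge[OF that]] that gen_carrier[OF that(3)] by auto
  have lab: "[\<kappa> (h, e1) = \<kappa> (h, e2)] (mod d)"
    if h: "h \<in> carrier G" and e1: "e1 \<in> sidx n" and e2: "e2 \<in> sidx n" for h e1 e2
  proof -
    obtain e where e: "e \<in> sidx n" "e \<noteq> - e1" "e \<noteq> - e2" using common_succ[OF e1 e2] by blast
    have "[\<kappa> (h, e1) + 1 = \<kappa> (h, e2) + 1] (mod d)"
      using edge[OF h e1 e(1,2)] edge[OF h e2 e(1,3)] by (metis cong_sym cong_trans)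
    then show ?thesis by (simp only: cong_add_rcancel_nat)
  qed
  have x1: "xg 1 \<in> carrier G" using xG n2 by auto
  have s1: "(1::int) \<in> sidx n" and sm1: "(-1::int) \<in> sidx n" using n2 unfolding sidx_def by auto
  have g1: "gn 1 = xg 1" and gm1: "gn (-1) = inv (xg 1)" unfolding nbw_gen_def by auto
  have a1: "[\<kappa> (\<one>, 1) + 1 = \<kappa> (xg 1, 1)] (mod d)"
    using edge[of \<one> 1 1] s1 g1 x1 by simp
  have a2: "[\<kappa> (xg 1, -1) + 1 = \<kappa> (\<one>, -1)] (mod d)"
    using edge[of "xg 1" "-1" "-1"] sm1 gm1 x1 by simp
  have a3: "[\<kappa> (xg 1, 1) = \<kappa> (xg 1, -1)] (mod d)" using lab x1 s1 sm1 by blast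
  have a4: "[\<kappa> (\<one>, -1) = \<kappa> (\<one>, 1)] (mod d)" using lab s1 sm1 by blast
  have "[\<kappa> (\<one>, 1) + 1 + 1 = \<kappa> (xg 1, 1) + 1] (mod d)" using a1 by (simp only: cong_add_rcancel_nat)
  also have "[\<kappa> (xg 1, 1) + 1 = \<kappa> (xg 1, -1) + 1] (mod d)" using a3 by (simp only: cong_add_rcancel_nat)
  also note a2
  also note a4
  finally have "[\<kappa> (\<one>, 1) + 2 = \<kappa> (\<one>, 1)] (mod d)" by (simp add: add.assoc)
  then have "d dvd 2" by (simp only: cong_add_lcancel_0_nat cong_0_iff)
  then have "d \<le> 2" by (rule dvd_imp_le) simp
  then have "d = 1 \<or> d = 2" using d by linarith
  then show ?thesis
  proof
    assume d1: "d = 1"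
    have "\<forall>s\<in>\<Omega>. \<forall>t\<in>\<Omega>. \<forall>l\<ge>M. rch l s t"
    proof (intro ballI allI impI)
      fix s t l assume "s \<in> \<Omega>" "t \<in> \<Omega>" "M \<le> l"
      then show "rch l s t" using P2[of s t l] d1 by simp
    qed
    then show ?thesis by blast
  next
    assume d2: "d = 2"
    have P1': "odd (\<kappa> s + l) = odd (\<kappa> t)" if "s\<in>\<Omega>" "t\<in>\<Omega>" "rch l s t" for s t l
      using P1[OF that] unfolding d2 cong_def by presburger
    have lab': "odd (\<kappa> (h, e)) = odd (\<kappa> (h, 1))" if "h \<in> carrier G" "e \<in> sidx n" for h e
      using lab[OF that s1] unfolding d2 cong_def by (simp add: odd_iff_mod_2_eq_one)
    define p where "p g \<longleftrightarrow> odd (\<kappa> (g, 1)) \<noteq> odd (\<kappa> (\<one>, 1))" for g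
    have flip: "p (h \<otimes> gn e) = (\<not> p h)" if h: "h \<in> carrier G" and e: "e \<in> sidx n" for h e
    proof -
      have ee: "e \<noteq> - e" using sidx_nz[OF e] by simp
      have "odd (\<kappa> (h, e) + 1) = odd (\<kappa> (h \<otimes> gn e, e))"
        using P1'[OF _ _ rch_edge[OF h e e ee]] h e gen_carrier[OF e] by auto
      then show ?thesis unfolding p_def using lab'[OF h e] lab'[of "h \<otimes> gn e" e] h e gen_carrier[OF e]
        by auto
    qed
    have p1: "\<not> p \<one>" unfolding p_def by simp
    have pX: "p y" if yX: "y \<in> xg ` {1..n}" for y
    proof -
      obtain k where k: "k \<in> {1..n}" "y = xg k" using yX by auto
      have "p (\<one> \<otimes> gn (int k))" using flip[OF one_closed sidx_int[OF k(1)]] p1 by simp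
      then show ?thesis using k gen_pos[of k] xG[OF k(1)] by simp
    qed
    have pXi: "p (inv y)" if yX: "y \<in> xg ` {1..n}" for y
    proof -
      obtain k where k: "k \<in> {1..n}" "y = xg k" using yX by auto
      have "p (\<one> \<otimes> gn (- int k))" using flip[OF one_closed sidx_neg[OF sidx_int[OF k(1)]]] p1 by simp
      then show ?thesis using k gen_neg[of k] xG[OF k(1)] by simp
    qed
    have pm_gen: "\<forall>a\<in>carrier G. p (a \<otimes> b) = (p a \<noteq> p b)" if b: "b \<in> generate G (xg ` {1..n})" for b
      using b
    proof (induction rule: generate.induct)
      case one then show ?case using p1 by simp
    next
      case (incl y)
      obtain k where k: "k \<in> {1..n}" "y = xg k" using incl by auto
      show ?case using flip[OF _ sidx_int[OF k(1)]] gen_pos[of k] k pX[OF incl] by auto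
    next
      case (inv y)
      obtain k where k: "k \<in> {1..n}" "y = xg k" using inv by auto
      show ?case using flip[OF _ sidx_neg[OF sidx_int[OF k(1)]]] gen_neg[of k] k pXi[OF inv] by auto
    next
      case (eng h1 h2)
      have c1: "h1 \<in> carrier G" and c2: "h2 \<in> carrier G"
        using eng.hyps generate_in_carrier[OF X_carrier] by auto
      have "p (h1 \<otimes> h2) = (p h1 \<noteq> p h2)" using eng.IH(2) c1 by auto
      then show ?case using eng.IH c1 c2 by (auto simp: m_assoc[symmetric])
    qed
    have pm: "\<forall>a\<in>carrier G. \<forall>b\<in>carrier G. p (a \<otimes> b) = (p a \<noteq> p b)"
      using pm_gen gen by auto
    have pos: "\<forall>s\<in>\<Omega>. \<forall>t\<in>\<Omega>. \<forall>l\<ge>M. even l \<and> p (fst s) = p (fst t) \<longrightarrow> rch l s t"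
    proof (intro ballI allI impI)
      fix s t l assume s: "s \<in> \<Omega>" and t: "t \<in> \<Omega>" and l: "l \<ge> M" and c: "even l \<and> p (fst s) = p (fst t)"
      obtain g e where ge: "s = (g, e)" by (cases s)
      obtain h f where hf: "t = (h, f)" by (cases t)
      have "odd (\<kappa> s) = odd (\<kappa> t)"
        using lab'[of g e] lab'[of h f] s t ge hf c unfolding p_def by auto
      moreover have "even l" using c by simp
      ultimately have "[\<kappa> s + l = \<kappa> t] (mod d)" unfolding d2 cong_def
        by presburger
      then show "rch l s t" using P2[OF s t l] by simp
    qed
    have "\<forall>i\<in>{1..n}. p (xg i)" using pX by auto
    then show ?thesis using pm p1 pos by blast
  qed
qed

end



lemma contract:
  fixes S :: "'s set" and Q :: "'s \<Rightarrow> 's \<Rightarrow> real" and v :: "'s \<Rightarrow> real" and c :: "'s \<Rightarrow> 'c"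
  assumes fin: "finite S"
    and nn: "\<And>s t. s\<in>S \<Longrightarrow> t\<in>S \<Longrightarrow> 0 \<le> Q s t"
    and rows: "\<And>s. s\<in>S \<Longrightarrow> (\<Sum>t\<in>S. Q s t) = 1"
    and lb: "\<And>s t. s\<in>S \<Longrightarrow> t\<in>S \<Longrightarrow> c s = c t \<Longrightarrow> \<delta> \<le> Q s t"
    and cls: "\<And>t. t\<in>S \<Longrightarrow> (\<Sum>s\<in>{s\<in>S. c s = c t}. v s) = 0"
    and \<delta>: "0 \<le> \<delta>"
  shows "(\<Sum>t\<in>S. \<bar>\<Sum>s\<in>S. v s * Q s t\<bar>) \<le> (1 - \<delta>) * (\<Sum>s\<in>S. \<bar>v s\<bar>)"
proof -
  define ind where "ind s t = (if c s = c t then \<delta> else 0)" for s t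
  have step1: "(\<Sum>s\<in>S. v s * Q s t) = (\<Sum>s\<in>S. v s * (Q s t - ind s t))" if t: "t \<in> S" for t
  proof -
    have "(\<Sum>s\<in>S. v s * ind s t) = (\<Sum>s\<in>S. if c s = c t then \<delta> * v s else 0)"
      unfolding ind_def by (rule sum.cong) auto
    also have "\<dots> = (\<Sum>s\<in>{s\<in>S. c s = c t}. \<delta> * v s)"
      by (rule sum.inter_filter[OF fin, symmetric])
    also have "\<dots> = \<delta> * (\<Sum>s\<in>{s\<in>S. c s = c t}. v s)"
      by (simp add: sum_distrib_left)
    also have "\<dots> = 0" using cls[OF t] by simp
    finally show ?thesis by (simp add: right_diff_distrib sum_subtractf)
  qed
  have nn2: "0 \<le> Q s t - ind s t" if "s \<in> S" "t \<in> S" for s t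
    using lb[OF that] nn[OF that] unfolding ind_def by auto
  have "(\<Sum>t\<in>S. \<bar>\<Sum>s\<in>S. v s * Q s t\<bar>) \<le> (\<Sum>t\<in>S. \<Sum>s\<in>S. \<bar>v s\<bar> * (Q s t - ind s t))"
  proof (rule sum_mono)
    fix t assume t: "t \<in> S"
    have "\<bar>\<Sum>s\<in>S. v s * Q s t\<bar> = \<bar>\<Sum>s\<in>S. v s * (Q s t - ind s t)\<bar>" using step1[OF t] by simp
    also have "\<dots> \<le> (\<Sum>s\<in>S. \<bar>v s * (Q s t - ind s t)\<bar>)" by (rule sum_abs)
    also have "\<dots> = (\<Sum>s\<in>S. \<bar>v s\<bar> * (Q s t - ind s t))"
      by (rule sum.cong) (use nn2 t in \<open>auto simp: abs_mult\<close>)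
    finally show "\<bar>\<Sum>s\<in>S. v s * Q s t\<bar> \<le> (\<Sum>s\<in>S. \<bar>v s\<bar> * (Q s t - ind s t))" .
  qed
  also have "\<dots> = (\<Sum>s\<in>S. \<bar>v s\<bar> * (\<Sum>t\<in>S. Q s t - ind s t))"
    by (subst sum.swap) (simp add: sum_distrib_left)
  also have "\<dots> \<le> (\<Sum>s\<in>S. \<bar>v s\<bar> * (1 - \<delta>))"
  proof (rule sum_mono)
    fix s assume s: "s \<in> S"
    have "(\<Sum>t\<in>S. ind s t) = (\<Sum>t\<in>{t\<in>S. c s = c t}. \<delta>)"
      unfolding ind_def by (rule sum.inter_filter[OF fin, symmetric])
    also have "\<dots> = \<delta> * card {t\<in>S. c s = c t}" by simp
    also have "\<dots> \<ge> \<delta>"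
    proof -
      have fin2: "finite {t\<in>S. c s = c t}" using fin by simp
      have "s \<in> {t\<in>S. c s = c t}" using s by simp
      then have "card {t\<in>S. c s = c t} > 0" using fin2 card_gt_0_iff by blast
      then have "card {t\<in>S. c s = c t} \<ge> 1" by simp
      then show ?thesis using \<delta> by (metis mult_cancel_left1 mult_left_mono of_nat_1 of_nat_le_iff)
    qed
    finally have "(\<Sum>t\<in>S. Q s t - ind s t) \<le> 1 - \<delta>" using rows[OF s] by (simp add: sum_subtractf)
    then show "\<bar>v s\<bar> * (\<Sum>t\<in>S. Q s t - ind s t) \<le> \<bar>v s\<bar> * (1 - \<delta>)" by (rule mult_left_mono) simp
  qed
  also have "\<dots> = (1 - \<delta>) * (\<Sum>s\<in>S. \<bar>v s\<bar>)" by (metis sum_distrib_right mult.commute)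
  finally show ?thesis .
qed

lemma aggregate:
  fixes F :: "nat \<Rightarrow> 'g \<Rightarrow> real"
  assumes fin: "finite C" and ne: "C \<noteq> {}"
    and tot: "\<And>l. (\<Sum>h\<in>C. F l h) = 1"
    and diff: "\<And>g h. g \<in> C \<Longrightarrow> h \<in> C \<Longrightarrow> (\<lambda>l. F l g - F l h) \<longlonglongrightarrow> 0"
    and g: "g \<in> C"
  shows "(\<lambda>l. F l g) \<longlonglongrightarrow> 1 / real (card C)"
proof -
  have cpos0: "card C > 0" using fin ne card_gt_0_iff by blast
  then have cpos: "real (card C) > 0" by simp
  have eq: "F l g = (1 + (\<Sum>h\<in>C. F l g - F l h)) / real (card C)" for l
  proof -
    have "(\<Sum>h\<in>C. F l g - F l h) = real (card C) * F l g - 1"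
      using tot[of l] by (simp add: sum_subtractf)
    then show ?thesis using cpos by (simp add: field_simps)
  qed
  have "(\<lambda>l. (1 + (\<Sum>h\<in>C. F l g - F l h)) / real (card C)) \<longlonglongrightarrow> (1 + (\<Sum>h\<in>C. 0)) / real (card C)"
    by (intro tendsto_intros diff g) (use cpos0 in auto)
  then show ?thesis using eq by simp
qed

context nbw
begin

abbreviation "ini \<equiv> nbw_init G n xg \<beta>"
abbreviation "fsd \<equiv> nbw_sum_dist G n xg \<alpha> \<beta>"

definition rho :: "nat \<Rightarrow> 'a \<times> int \<Rightarrow> real" where
  "rho j t = (\<Sum>s\<in>\<Omega>. ini s * Pw j s t)"

lemma dist_rho: "nbw_dist G n xg \<alpha> \<beta> l t = rho (l - 1) t"
  unfolding nbw_dist_def rho_def by simp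

lemma fsd_rho: "fsd l g = (\<Sum>e\<in>sidx n. rho (l - 1) (g, e))"
  unfolding nbw_sum_dist_def dist_rho by simp

lemma rho_Suc: "rho (Suc j) t = (\<Sum>u\<in>\<Omega>. rho j u * Pt u t)"
proof -
  have "rho (Suc j) t = (\<Sum>s\<in>\<Omega>. \<Sum>u\<in>\<Omega>. ini s * (Pw j s u * Pt u t))"
    unfolding rho_def by (simp add: sum_distrib_left)
  also have "\<dots> = (\<Sum>u\<in>\<Omega>. \<Sum>s\<in>\<Omega>. ini s * Pw j s u * Pt u t)" by (subst sum.swap) (simp add: mult.assoc)
  also have "\<dots> = (\<Sum>u\<in>\<Omega>. rho j u * Pt u t)" unfolding rho_def by (simp add: sum_distrib_right)
  finally show ?thesis .
qed

lemma ini_sum: "(\<Sum>s\<in>\<Omega>. ini s) = 1"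
proof -
  have "(\<Sum>s\<in>\<Omega>. ini s) = (\<Sum>g\<in>carrier G. \<Sum>e\<in>sidx n. ini (g, e))"
    unfolding nbw_states_def by (simp add: sum.cartesian_product)
  also have "\<dots> = (\<Sum>e\<in>sidx n. \<Sum>g\<in>carrier G. ini (g, e))" by (rule sum.swap)
  also have "\<dots> = (\<Sum>e\<in>sidx n. \<beta> e)"
  proof (rule sum.cong)
    fix e assume e: "e \<in> sidx n"
    have "(\<Sum>g\<in>carrier G. ini (g, e)) = (\<Sum>g\<in>carrier G. if g = gn e then \<beta> e else 0)"
      by (rule sum.cong) (auto simp: nbw_init_def e)
    also have "\<dots> = \<beta> e" using gen_carrier[OF e] fin by (simp add: sum.delta)
    finally show "(\<Sum>g\<in>carrier G. ini (g, e)) = \<beta> e" .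
  qed simp
  finally show ?thesis using \<beta>_sum by simp
qed

lemma ini_nonneg: "0 \<le> ini s"
  unfolding nbw_init_def using \<beta>_pos by (auto intro: less_imp_le)

lemma rho_sum: "(\<Sum>t\<in>\<Omega>. rho j t) = 1"
proof -
  have "(\<Sum>t\<in>\<Omega>. rho j t) = (\<Sum>s\<in>\<Omega>. ini s * (\<Sum>t\<in>\<Omega>. Pw j s t))"
    unfolding rho_def by (subst sum.swap) (simp add: sum_distrib_left)
  also have "\<dots> = (\<Sum>s\<in>\<Omega>. ini s)" by (rule sum.cong) (auto simp: Pw_rowsum)
  finally show ?thesis using ini_sum by simp
qed

lemma fsd_sum: "(\<Sum>g\<in>carrier G. fsd l g) = 1"
proof -
  have "(\<Sum>g\<in>carrier G. fsd l g) = (\<Sum>t\<in>\<Omega>. rho (l - 1) t)"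
    unfolding fsd_rho nbw_states_def by (simp add: sum.cartesian_product)
  then show ?thesis using rho_sum by simp
qed

lemma Pt_transl: assumes a: "a \<in> carrier G" and h: "h \<in> carrier G" and g: "g \<in> carrier G"
  shows "Pt (a \<otimes> h, e') (a \<otimes> g, e) = Pt (h, e') (g, e)"
proof (cases "e \<in> sidx n")
  case True
  have "(a \<otimes> g = a \<otimes> h \<otimes> gn e) \<longleftrightarrow> (g = h \<otimes> gn e)"
    using a h g gen_carrier[OF True] by (simp add: m_assoc)
  then show ?thesis unfolding nbw_trans_def using a h by simp
next
  case False
  then show ?thesis unfolding nbw_trans_def by simp
qed

lemma sum_transl: assumes a: "a \<in> carrier G"
  shows "(\<Sum>u\<in>\<Omega>. F (a \<otimes> fst u, snd u)) = (\<Sum>u\<in>\<Omega>. F u)"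
  by (rule sum.reindex_bij_witness[where i = "\<lambda>u. (inv a \<otimes> fst u, snd u)" and j = "\<lambda>u. (a \<otimes> fst u, snd u)"])
     (auto simp: a m_assoc[symmetric] nbw_states_def)

definition vv :: "'a \<Rightarrow> nat \<Rightarrow> 'a \<times> int \<Rightarrow> real" where
  "vv a j t = rho j t - rho j (inv a \<otimes> fst t, snd t)"

lemma sig_Suc: assumes a: "a \<in> carrier G" and t: "t \<in> \<Omega>"
  shows "rho (Suc j) (inv a \<otimes> fst t, snd t) = (\<Sum>u\<in>\<Omega>. rho j (inv a \<otimes> fst u, snd u) * Pt u t)"
proof -
  have ia: "inv a \<in> carrier G" using a by simp
  have tc: "fst t \<in> carrier G" using t by (cases t) auto
  have "rho (Suc j) (inv a \<otimes> fst t, snd t) = (\<Sum>u\<in>\<Omega>. rho j u * Pt u (inv a \<otimes> fst t, snd t))"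
    by (rule rho_Suc)
  also have "\<dots> = (\<Sum>u\<in>\<Omega>. rho j (inv a \<otimes> fst u, snd u) * Pt (inv a \<otimes> fst u, snd u) (inv a \<otimes> fst t, snd t))"
    by (rule sum_transl[OF ia, symmetric])
  also have "\<dots> = (\<Sum>u\<in>\<Omega>. rho j (inv a \<otimes> fst u, snd u) * Pt u t)"
  proof (rule sum.cong)
    fix u assume u: "u \<in> \<Omega>"
    have uc: "fst u \<in> carrier G" using u by (cases u) auto
    show "rho j (inv a \<otimes> fst u, snd u) * Pt (inv a \<otimes> fst u, snd u) (inv a \<otimes> fst t, snd t)
        = rho j (inv a \<otimes> fst u, snd u) * Pt u t"
      using Pt_transl[OF ia uc tc, of "snd u" "snd t"] by simp
  qed simp
  finally show ?thesis .
qed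

lemma vv_Suc: "a \<in> carrier G \<Longrightarrow> t \<in> \<Omega> \<Longrightarrow> vv a (Suc j) t = (\<Sum>u\<in>\<Omega>. vv a j u * Pt u t)"
  unfolding vv_def using sig_Suc rho_Suc by (simp add: left_diff_distrib sum_subtractf)

lemma vv_add: assumes a: "a \<in> carrier G" shows "t \<in> \<Omega> \<Longrightarrow> vv a (j + k) t = (\<Sum>u\<in>\<Omega>. vv a j u * Pw k u t)"
proof (induction k arbitrary: t)
  case 0
  have "(\<Sum>u\<in>\<Omega>. vv a j u * Pw 0 u t) = (\<Sum>u\<in>\<Omega>. if t = u then vv a j u else 0)"
    by (rule sum.cong) auto
  then show ?case using 0 Omega_fin by (simp add: sum.delta)
next
  case (Suc k)
  have "vv a (j + Suc k) t = (\<Sum>w\<in>\<Omega>. vv a (j + k) w * Pt w t)" using vv_Suc[OF a Suc.prems] by simp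
  also have "\<dots> = (\<Sum>w\<in>\<Omega>. (\<Sum>u\<in>\<Omega>. vv a j u * Pw k u w) * Pt w t)"
    by (rule sum.cong) (auto simp: Suc.IH)
  also have "\<dots> = (\<Sum>w\<in>\<Omega>. \<Sum>u\<in>\<Omega>. vv a j u * (Pw k u w * Pt w t))"
    by (simp add: sum_distrib_right mult.assoc)
  also have "\<dots> = (\<Sum>u\<in>\<Omega>. \<Sum>w\<in>\<Omega>. vv a j u * (Pw k u w * Pt w t))" by (rule sum.swap)
  also have "\<dots> = (\<Sum>u\<in>\<Omega>. vv a j u * Pw (Suc k) u t)" by (simp add: sum_distrib_left)
  finally show ?case .
qed

lemma vv_class: assumes a: "a \<in> carrier G" and inv: "\<And>g e. g \<in> carrier G \<Longrightarrow> e \<in> sidx n \<Longrightarrow> c (a \<otimes> g, e) = c (g, e)"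
  shows "(\<Sum>s\<in>{s\<in>\<Omega>. c s = C}. vv a j s) = 0"
proof -
  have "(\<Sum>s\<in>{s\<in>\<Omega>. c s = C}. rho j (inv a \<otimes> fst s, snd s))
      = (\<Sum>s\<in>\<Omega>. if c s = C then rho j (inv a \<otimes> fst s, snd s) else 0)"
    by (simp add: sum.inter_filter[OF Omega_fin])
  also have "\<dots> = (\<Sum>u\<in>\<Omega>. if c u = C then rho j u else 0)"
  proof (rule sum.reindex_bij_witness[where i = "\<lambda>u. (a \<otimes> fst u, snd u)" and j = "\<lambda>u. (inv a \<otimes> fst u, snd u)"])
    fix u assume u: "u \<in> \<Omega>"
    obtain g e where ge: "u = (g, e)" by (cases u)
    have g: "g \<in> carrier G" and e: "e \<in> sidx n" using u ge by auto
    have ig: "inv a \<otimes> g \<in> carrier G" using a g by simp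
    have "c (a \<otimes> (inv a \<otimes> g), e) = c (inv a \<otimes> g, e)" by (rule inv[OF ig e])
    then have "c (inv a \<otimes> g, e) = c (g, e)" using a g by (simp add: m_assoc[symmetric])
    then show "(if c (inv a \<otimes> fst u, snd u) = C then rho j (inv a \<otimes> fst u, snd u) else 0)
        = (if c u = C then rho j (inv a \<otimes> fst u, snd u) else 0)" using ge by simp
  qed (auto simp: a m_assoc[symmetric])
  also have "\<dots> = (\<Sum>s\<in>{s\<in>\<Omega>. c s = C}. rho j s)"
    by (simp add: sum.inter_filter[OF Omega_fin])
  finally show ?thesis unfolding vv_def by (simp add: sum_subtractf)
qed

definition nv :: "'a \<Rightarrow> nat \<Rightarrow> real" where
  "nv a j = (\<Sum>t\<in>\<Omega>. \<bar>vv a j t\<bar>)"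

lemma nv_nonneg: "0 \<le> nv a j" unfolding nv_def by (simp add: sum_nonneg)

lemma nv_step:
  assumes a: "a \<in> carrier G" and inv: "\<And>g e. g \<in> carrier G \<Longrightarrow> e \<in> sidx n \<Longrightarrow> c (a \<otimes> g, e) = c (g, e)"
    and lb: "\<And>s t. s \<in> \<Omega> \<Longrightarrow> t \<in> \<Omega> \<Longrightarrow> c s = c t \<Longrightarrow> \<delta> \<le> Pw m s t" and \<delta>: "0 \<le> \<delta>"
  shows "nv a (j + m) \<le> (1 - \<delta>) * nv a j"
proof -
  have "nv a (j + m) = (\<Sum>t\<in>\<Omega>. \<bar>\<Sum>s\<in>\<Omega>. vv a j s * Pw m s t\<bar>)"
    unfolding nv_def by (rule sum.cong) (auto simp: vv_add[OF a])
  also have "\<dots> \<le> (1 - \<delta>) * nv a j" unfolding nv_def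
    by (rule contract[where c = c]) (auto intro: Omega_fin Pw_nonneg Pw_rowsum lb \<delta> vv_class[OF a inv])
  finally show ?thesis .
qed

lemma nv_conv:
  assumes m: "m \<ge> 1" and pos: "\<And>s t. s \<in> \<Omega> \<Longrightarrow> t \<in> \<Omega> \<Longrightarrow> c s = c t \<Longrightarrow> rch m s t"
    and a: "a \<in> carrier G" and inv: "\<And>g e. g \<in> carrier G \<Longrightarrow> e \<in> sidx n \<Longrightarrow> c (a \<otimes> g, e) = c (g, e)"
  shows "nv a \<longlonglongrightarrow> 0"
proof -
  define PS where "PS = (\<lambda>(s, t). Pw m s t) ` {st \<in> \<Omega> \<times> \<Omega>. c (fst st) = c (snd st)}"
  define \<delta> where "\<delta> = Min PS"
  have PSfin: "finite PS" unfolding PS_def using Omega_fin by simp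
  obtain s0 where s0: "s0 \<in> \<Omega>" using s0_Omega by blast
  have "(s0, s0) \<in> {st \<in> \<Omega> \<times> \<Omega>. c (fst st) = c (snd st)}" using s0 by simp
  then have PSne: "PS \<noteq> {}" unfolding PS_def by blast
  have PSpos: "\<forall>y\<in>PS. 0 < y" unfolding PS_def using pos unfolding rch_def by auto
  have \<delta>pos: "0 < \<delta>" unfolding \<delta>_def using PSfin PSne PSpos by simp
  have lb: "\<delta> \<le> Pw m s t" if "s \<in> \<Omega>" "t \<in> \<Omega>" "c s = c t" for s t
  proof -
    have "Pw m s t \<in> PS" unfolding PS_def using that by (auto intro!: image_eqI[of _ _ "(s, t)"])
    then show ?thesis unfolding \<delta>_def using PSfin by simp
  qed
  have "\<delta> \<le> Pw m s0 s0" using lb s0 by simp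
  also have "Pw m s0 s0 \<le> (\<Sum>t\<in>\<Omega>. Pw m s0 t)" by (rule member_le_sum) (auto intro: s0 Pw_nonneg Omega_fin)
  also have "\<dots> = 1" using Pw_rowsum[OF s0] .
  finally have \<delta>1: "\<delta> \<le> 1" .
  have step1: "nv a (Suc j) \<le> nv a j" for j
  proof -
    have lb0: "\<And>s t. s \<in> \<Omega> \<Longrightarrow> t \<in> \<Omega> \<Longrightarrow> c s = c t \<Longrightarrow> (0::real) \<le> Pw 1 s t"
      by (rule Pw_nonneg)
    have "nv a (j + 1) \<le> (1 - 0) * nv a j" by (rule nv_step[OF a inv lb0]) auto
    then show ?thesis by simp
  qed
  have mono: "nv a (j + k) \<le> nv a j" for j k
  proof (induction k)
    case (Suc k)
    have "nv a (j + Suc k) = nv a (Suc (j + k))" by simp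
    also have "\<dots> \<le> nv a (j + k)" by (rule step1)
    finally show ?case using Suc by linarith
  qed simp
  have geo: "nv a (k * m) \<le> (1 - \<delta>)^k * nv a 0" for k
  proof (induction k)
    case (Suc k)
    have "nv a (Suc k * m) = nv a (k * m + m)" by (simp add: add.commute)
    also have "\<dots> \<le> (1 - \<delta>) * nv a (k * m)" by (rule nv_step[OF a inv lb]) (use \<delta>pos in auto)
    also have "\<dots> \<le> (1 - \<delta>) * ((1 - \<delta>)^k * nv a 0)" by (rule mult_left_mono[OF Suc]) (use \<delta>1 in simp)
    finally show ?case by simp
  qed simp
  show ?thesis
  proof (rule LIMSEQ_I)
    fix r :: real assume r: "0 < r"
    have y: "r / (nv a 0 + 1) > 0" using r nv_nonneg[of a 0] by simp
    have x: "1 - \<delta> < 1" using \<delta>pos by simp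
    obtain K where K: "(1 - \<delta>)^K < r / (nv a 0 + 1)"
      using real_arch_pow_inv[OF y x] by blast
    have "norm (nv a l - 0) < r" if l: "l \<ge> K * m" for l
    proof -
      have "nv a l \<le> nv a (K * m)" using mono[of "K * m" "l - K * m"] l by simp
      also have "\<dots> \<le> (1 - \<delta>)^K * nv a 0" by (rule geo)
      also have "\<dots> \<le> (1 - \<delta>)^K * (nv a 0 + 1)" using \<delta>1 by (intro mult_left_mono) auto
      also have "\<dots> < r" using K nv_nonneg[of a 0] by (simp add: pos_less_divide_eq)
      finally show ?thesis using nv_nonneg[of a l] by simp
    qed
    then show "\<exists>no. \<forall>l\<ge>no. norm (nv a l - 0) < r" by blast
  qed
qed

lemma transl_conv:
  assumes m: "m \<ge> 1" and pos: "\<And>s t. s \<in> \<Omega> \<Longrightarrow> t \<in> \<Omega> \<Longrightarrow> c s = c t \<Longrightarrow> rch m s t"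
    and a: "a \<in> carrier G" and inv: "\<And>g e. g \<in> carrier G \<Longrightarrow> e \<in> sidx n \<Longrightarrow> c (a \<otimes> g, e) = c (g, e)"
    and g: "g \<in> carrier G"
  shows "(\<lambda>l. fsd l g - fsd l (inv a \<otimes> g)) \<longlonglongrightarrow> 0"
proof -
  have nv0: "nv a \<longlonglongrightarrow> 0" by (rule nv_conv[OF m pos a inv])
  have "(\<lambda>l. nv a (Suc l - 1)) \<longlonglongrightarrow> 0" using nv0 by simp
  then have nv1: "(\<lambda>l. nv a (l - 1)) \<longlonglongrightarrow> 0" by (rule LIMSEQ_imp_Suc)
  have bound: "norm (fsd l g - fsd l (inv a \<otimes> g)) \<le> nv a (l - 1)" for l
  proof -
    have "fsd l g - fsd l (inv a \<otimes> g) = (\<Sum>e\<in>sidx n. vv a (l - 1) (g, e))"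
      unfolding fsd_rho vv_def by (simp add: sum_subtractf)
    then have "norm (fsd l g - fsd l (inv a \<otimes> g)) \<le> (\<Sum>e\<in>sidx n. \<bar>vv a (l - 1) (g, e)\<bar>)"
      by (simp add: sum_abs)
    also have "\<dots> = (\<Sum>t\<in>{g} \<times> sidx n. \<bar>vv a (l - 1) t\<bar>)"
    proof -
      have "{g} \<times> sidx n = Pair g ` sidx n" by auto
      then show ?thesis by (simp add: sum.reindex inj_on_def)
    qed
    also have "\<dots> \<le> nv a (l - 1)" unfolding nv_def
      by (rule sum_mono2) (use Omega_fin g in auto)
    finally show ?thesis .
  qed
  have m1: "(\<lambda>l. - nv a (l - 1)) \<longlonglongrightarrow> 0" using tendsto_minus[OF nv1] by simp
  show ?thesis
  proof (rule tendsto_sandwich[OF _ _ m1 nv1])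
    have b2: "- nv a (l - 1) \<le> fsd l g - fsd l (inv a \<otimes> g) \<and> fsd l g - fsd l (inv a \<otimes> g) \<le> nv a (l - 1)" for l
      using bound[of l] unfolding real_norm_def abs_le_iff by linarith
    show "\<forall>\<^sub>F l in sequentially. - nv a (l - 1) \<le> fsd l g - fsd l (inv a \<otimes> g)"
      using b2 by (intro always_eventually) blast
    show "\<forall>\<^sub>F l in sequentially. fsd l g - fsd l (inv a \<otimes> g) \<le> nv a (l - 1)"
      using b2 by (intro always_eventually) blast
  qed
qed

end



context nbw
begin

lemma gcd_one_aux: assumes "M \<ge> 1" "M \<in> A" "Suc M \<in> A" shows "Gcd (A::nat set) = 1"
proof -
  have "Gcd A dvd M" "Gcd A dvd Suc M" using assms by (auto intro: Gcd_dvd)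
  then have "Gcd A dvd Suc M - M" by (rule dvd_diff_nat[rotated])
  then show ?thesis by simp
qed

lemma case_prim: assumes prim: "\<exists>M. \<forall>s\<in>\<Omega>. \<forall>t\<in>\<Omega>. \<forall>l\<ge>M. rch l s t"
  shows "nbw_aperiodic G n xg \<alpha>"
    and "\<forall>g\<in>carrier G. (\<lambda>l. fsd l g) \<longlonglongrightarrow> 1 / real (card (carrier G))"
proof -
  obtain M where M: "\<And>s t l. s \<in> \<Omega> \<Longrightarrow> t \<in> \<Omega> \<Longrightarrow> l \<ge> M \<Longrightarrow> rch l s t" using prim by blast
  show "nbw_aperiodic G n xg \<alpha>"
    unfolding nbw_aperiodic_def nbw_period_def
  proof
    fix s assume s: "s \<in> \<Omega>"
    have h1: "rch (M + 1) s s" and h2: "rch (Suc (M + 1)) s s" by (rule M[OF s s], simp)+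
    show "Gcd {l. l \<ge> 1 \<and> Pw l s s > 0} = 1"
      by (rule gcd_one_aux[of "M + 1"]) (use h1 h2 in \<open>simp_all del: nbw_trans_pow.simps add: rch_def\<close>)
  qed
  show "\<forall>g\<in>carrier G. (\<lambda>l. fsd l g) \<longlonglongrightarrow> 1 / real (card (carrier G))"
  proof
    fix g assume g: "g \<in> carrier G"
    show "(\<lambda>l. fsd l g) \<longlonglongrightarrow> 1 / real (card (carrier G))"
    proof (rule aggregate[OF fin carrier_ne fsd_sum _ g])
      fix g h assume g: "g \<in> carrier G" and h: "h \<in> carrier G"
      define a where "a = g \<otimes> inv h"
      have a: "a \<in> carrier G" unfolding a_def using g h by simp
      have ag: "inv a \<otimes> g = h" unfolding a_def using g h by (simp add: inv_mult_group m_assoc)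
      have "(\<lambda>l. fsd l g - fsd l (inv a \<otimes> g)) \<longlonglongrightarrow> 0"
        by (rule transl_conv[where c = "\<lambda>_. ()" and m = "M + 1"]) (use M a g in auto)
      then show "(\<lambda>l. fsd l g - fsd l h) \<longlonglongrightarrow> 0" using ag by simp
    qed
  qed
qed

lemma case_par:
  assumes pm: "\<forall>a\<in>carrier G. \<forall>b\<in>carrier G. p (a \<otimes> b) = (p a \<noteq> p b)"
    and p1: "\<not> p \<one>" and pX: "\<forall>i\<in>{1..n}. p (xg i)"
    and posM: "\<exists>M. \<forall>s\<in>\<Omega>. \<forall>t\<in>\<Omega>. \<forall>l\<ge>M. even l \<and> p (fst s) = p (fst t) \<longrightarrow> rch l s t"
  shows "\<not> nbw_aperiodic G n xg \<alpha>"
    and "\<exists>H. subgroup H G \<and> card (rcosets H) = 2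
               \<and> (\<forall>i\<in>{1..n}. xg i \<notin> H)
               \<and> (\<forall>g\<in>carrier G. (\<lambda>l. fsd (2 * l) g)
                     \<longlonglongrightarrow> (if g \<in> H then 1 / real (card H) else 0))
               \<and> (\<forall>g\<in>carrier G. (\<lambda>l. fsd (2 * l + 1) g)
                     \<longlonglongrightarrow> (if g \<in> carrier G - H then 1 / real (card (carrier G - H)) else 0))"
proof -
  obtain M where M: "\<And>s t l. s \<in> \<Omega> \<Longrightarrow> t \<in> \<Omega> \<Longrightarrow> l \<ge> M \<Longrightarrow> even l \<Longrightarrow> p (fst s) = p (fst t) \<Longrightarrow> rch l s t"
    using posM by blast
  have pinv: "p (inv a) = p a" if a: "a \<in> carrier G" for a
  proof -
    have "p (a \<otimes> inv a) = (p a \<noteq> p (inv a))" using pm a inv_closed by blast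
    then show ?thesis using p1 a by simp
  qed
  have pgn: "p (gn e)" if e: "e \<in> sidx n" for e
  proof (cases "0 < e")
    case True
    then have k: "nat e \<in> {1..n}" using e unfolding sidx_def by auto
    then show ?thesis using True pX unfolding nbw_gen_def by auto
  next
    case False
    then have k: "nat (- e) \<in> {1..n}" using e unfolding sidx_def by auto
    then show ?thesis using False pX pinv xG unfolding nbw_gen_def by auto
  qed
  have flip: "p (h \<otimes> gn e) = (\<not> p h)" if "h \<in> carrier G" "e \<in> sidx n" for h e
    using pm that gen_carrier pgn by auto
  have Pw_par: "p (fst t) = (p (fst s) \<noteq> odd l)" if "Pw l s t \<noteq> 0" for l s t
    using that
  proof (induction l arbitrary: t)
    case 0 then show ?case by (auto split: if_splits)
  next
    case (Suc l)
    then obtain u where u: "u \<in> \<Omega>" "Pw l s u * Pt u t \<noteq> 0"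
      by (auto elim: sum.not_neutral_contains_not_neutral)
    then have a: "Pw l s u \<noteq> 0" and b: "Pt u t \<noteq> 0" by auto
    from Pt_nz[OF b] have "p (fst t) = (\<not> p (fst u))" using flip by auto
    then show ?case using Suc.IH[OF a] by auto
  qed
  have rho_par: "p g = even j" if "rho j (g, e) \<noteq> 0" for j g e
  proof -
    have "(\<Sum>s\<in>\<Omega>. ini s * Pw j s (g, e)) \<noteq> 0" using that unfolding rho_def .
    then obtain s where s: "s \<in> \<Omega>" "ini s * Pw j s (g, e) \<noteq> 0"
      using sum.not_neutral_contains_not_neutral by blast
    then have i: "ini s \<noteq> 0" and w: "Pw j s (g, e) \<noteq> 0" by auto
    have "p (fst s)" using i pgn unfolding nbw_init_def by (auto split: if_splits)
    then show ?thesis using Pw_par[OF w] by simp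
  qed
  have fsd_par: "p g = even (l - 1)" if "fsd l g \<noteq> 0" for l g
  proof -
    have "(\<Sum>e\<in>sidx n. rho (l - 1) (g, e)) \<noteq> 0" using that unfolding fsd_rho .
    then obtain e where "rho (l - 1) (g, e) \<noteq> 0"
      using sum.not_neutral_contains_not_neutral by blast
    then show ?thesis by (rule rho_par)
  qed
  show "\<not> nbw_aperiodic G n xg \<alpha>"
  proof
    assume ap: "nbw_aperiodic G n xg \<alpha>"
    have "Gcd {l. l \<ge> 1 \<and> Pw l (\<one>, 1) (\<one>, 1) > 0} = 1"
      using ap s0_Omega unfolding nbw_aperiodic_def nbw_period_def by blast
    moreover have "2 dvd Gcd {l. l \<ge> 1 \<and> Pw l (\<one>, 1) (\<one>, 1) > 0}"
    proof (rule Gcd_greatest)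
      fix l assume "l \<in> {l. l \<ge> 1 \<and> Pw l (\<one>, 1) (\<one>, 1) > 0}"
      then have "Pw l (\<one>, 1) (\<one>, 1) \<noteq> 0" by simp
      from Pw_par[OF this] show "2 dvd l" by (cases "even l") auto
    qed
    ultimately show False by simp
  qed
  define H where "H = {g \<in> carrier G. \<not> p g}"
  have subH: "subgroup H G"
  proof (rule subgroupI)
    show "H \<subseteq> carrier G" unfolding H_def by auto
    show "H \<noteq> {}" unfolding H_def using p1 by auto
    show "inv a \<in> H" if "a \<in> H" for a using that pinv unfolding H_def by auto
    show "a \<otimes> b \<in> H" if "a \<in> H" "b \<in> H" for a b
    proof -
      have "p (a \<otimes> b) = (p a \<noteq> p b)" using pm that unfolding H_def by blast
      then show ?thesis using that unfolding H_def by auto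
    qed
  qed
  have coset: "H #> a = {g \<in> carrier G. p g = p a}" if a: "a \<in> carrier G" for a
  proof
    show "H #> a \<subseteq> {g \<in> carrier G. p g = p a}"
      unfolding r_coset_def H_def using pm a by auto
    show "{g \<in> carrier G. p g = p a} \<subseteq> H #> a"
    proof
      fix g assume g: "g \<in> {g \<in> carrier G. p g = p a}"
      have "g \<otimes> inv a \<in> H" using g a pm pinv unfolding H_def by auto
      moreover have "g = (g \<otimes> inv a) \<otimes> a" using g a by (simp add: m_assoc)
      ultimately show "g \<in> H #> a" unfolding r_coset_def by blast
    qed
  qed
  have x1: "xg 1 \<in> carrier G" "p (xg 1)" using xG pX n2 by auto
  have rc: "rcosets H = {{g \<in> carrier G. p g = False}, {g \<in> carrier G. p g = True}}"
  proof
    show "rcosets H \<subseteq> {{g \<in> carrier G. p g = False}, {g \<in> carrier G. p g = True}}"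
      unfolding RCOSETS_def using coset by (auto split: if_splits)
    show "{{g \<in> carrier G. p g = False}, {g \<in> carrier G. p g = True}} \<subseteq> rcosets H"
      unfolding RCOSETS_def using coset[OF one_closed] coset[OF x1(1)] p1 x1(2) by auto (metis One_nat_def x1(1))
  qed
  have "{g \<in> carrier G. p g = False} \<noteq> {g \<in> carrier G. p g = True}" using p1 by auto
  then have card2: "card (rcosets H) = 2" unfolding rc by simp
  have xnot: "\<forall>i\<in>{1..n}. xg i \<notin> H" using pX unfolding H_def by auto
  define m where "m = 2 * M + 2"
  have m: "m \<ge> 1" "even m" "m \<ge> M" unfolding m_def by auto
  define c where "c s = p (fst s)" for s :: "'a \<times> int"
  have pos: "rch m s t" if "s \<in> \<Omega>" "t \<in> \<Omega>" "c s = c t" for s t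
    by (rule M[OF that(1,2) m(3) m(2)]) (use that(3) in \<open>simp add: c_def\<close>)
  have diffH: "(\<lambda>l. fsd l g - fsd l h) \<longlonglongrightarrow> 0"
    if g: "g \<in> carrier G" and h: "h \<in> carrier G" and ph: "p g = p h" for g h
  proof -
    define a where "a = g \<otimes> inv h"
    have a: "a \<in> carrier G" unfolding a_def using g h by simp
    have pa: "\<not> p a" unfolding a_def using g h ph pm pinv by auto
    have ag: "inv a \<otimes> g = h" unfolding a_def using g h by (simp add: inv_mult_group m_assoc)
    have "(\<lambda>l. fsd l g - fsd l (inv a \<otimes> g)) \<longlonglongrightarrow> 0"
      by (rule transl_conv[where c = c and m = m, OF m(1) pos a _ g]) (use pa pm a in \<open>auto simp: c_def\<close>)
    then show ?thesis using ag by simp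
  qed
  have finH: "finite H" unfolding H_def using fin by simp
  have finC: "finite (carrier G - H)" using fin by simp
  have even_lim: "(\<lambda>l. fsd (2 * l) g) \<longlonglongrightarrow> (if g \<in> H then 1 / real (card H) else 0)"
    if g: "g \<in> carrier G" for g
  proof (cases "g \<in> H")
    case True
    have tot: "(\<Sum>h\<in>H. fsd (2 * Suc l) h) = 1" for l
    proof -
      have z: "\<forall>h\<in>carrier G - H. fsd (2 * Suc l) h = 0"
      proof
        fix h assume h: "h \<in> carrier G - H"
        then have ph: "p h" unfolding H_def by simp
        show "fsd (2 * Suc l) h = 0"
        proof (rule ccontr)
          assume "fsd (2 * Suc l) h \<noteq> 0"
          from fsd_par[OF this] ph show False by simp
        qed
      qed
      have "(\<Sum>h\<in>carrier G. fsd (2 * Suc l) h) = (\<Sum>h\<in>H. fsd (2 * Suc l) h)"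
        by (rule sum.mono_neutral_right[OF fin _ z]) (simp add: H_def)
      then show ?thesis using fsd_sum by simp
    qed
    have "(\<lambda>l. fsd (2 * Suc l) g) \<longlonglongrightarrow> 1 / real (card H)"
    proof (rule aggregate[where F = "\<lambda>l. fsd (2 * Suc l)", OF finH _ tot _ True])
      show "H \<noteq> {}" unfolding H_def using p1 by auto
      fix g h assume "g \<in> H" "h \<in> H"
      then have "(\<lambda>l. fsd l g - fsd l h) \<longlonglongrightarrow> 0" using diffH unfolding H_def by auto
      from LIMSEQ_subseq_LIMSEQ[OF this, of "\<lambda>l. 2 * Suc l"]
      show "(\<lambda>l. fsd (2 * Suc l) g - fsd (2 * Suc l) h) \<longlonglongrightarrow> 0"
        by (simp add: strict_mono_def comp_def)
    qed
    then have "(\<lambda>l. fsd (2 * l) g) \<longlonglongrightarrow> 1 / real (card H)"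
      by (rule LIMSEQ_imp_Suc[of "\<lambda>l. fsd (2 * l) g"])
    then show ?thesis using True by simp
  next
    case False
    then have "p g" using g unfolding H_def by auto
    then have "fsd (2 * Suc l) g = 0" for l
    proof (rule contrapos_pp)
      assume "fsd (2 * Suc l) g \<noteq> 0"
      from fsd_par[OF this] show "\<not> p g" by simp
    qed
    then have "(\<lambda>l. fsd (2 * Suc l) g) \<longlonglongrightarrow> 0" by simp
    then have "(\<lambda>l. fsd (2 * l) g) \<longlonglongrightarrow> 0"
      by (rule LIMSEQ_imp_Suc[of "\<lambda>l. fsd (2 * l) g"])
    then show ?thesis using False by simp
  qed
  have odd_lim: "(\<lambda>l. fsd (2 * l + 1) g) \<longlonglongrightarrow> (if g \<in> carrier G - H then 1 / real (card (carrier G - H)) else 0)"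
    if g: "g \<in> carrier G" for g
  proof (cases "g \<in> carrier G - H")
    case True
    have tot: "(\<Sum>h\<in>carrier G - H. fsd (2 * l + 1) h) = 1" for l
    proof -
      have z: "\<forall>h\<in>carrier G - (carrier G - H). fsd (2 * l + 1) h = 0"
      proof
        fix h assume h: "h \<in> carrier G - (carrier G - H)"
        then have ph: "\<not> p h" unfolding H_def by simp
        show "fsd (2 * l + 1) h = 0"
        proof (rule ccontr)
          assume "fsd (2 * l + 1) h \<noteq> 0"
          from fsd_par[OF this] ph show False by simp
        qed
      qed
      have "(\<Sum>h\<in>carrier G. fsd (2 * l + 1) h) = (\<Sum>h\<in>carrier G - H. fsd (2 * l + 1) h)"
        by (rule sum.mono_neutral_right[OF fin _ z]) auto
      then show ?thesis using fsd_sum by simp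
    qed
    have "(\<lambda>l. fsd (2 * l + 1) g) \<longlonglongrightarrow> 1 / real (card (carrier G - H))"
    proof (rule aggregate[where F = "\<lambda>l. fsd (2 * l + 1)", OF finC _ tot _ True])
      show "carrier G - H \<noteq> {}" unfolding H_def using x1 by auto
      fix g h assume "g \<in> carrier G - H" "h \<in> carrier G - H"
      then have "(\<lambda>l. fsd l g - fsd l h) \<longlonglongrightarrow> 0" using diffH unfolding H_def by auto
      from LIMSEQ_subseq_LIMSEQ[OF this, of "\<lambda>l. 2 * l + 1"]
      show "(\<lambda>l. fsd (2 * l + 1) g - fsd (2 * l + 1) h) \<longlonglongrightarrow> 0"
        by (simp add: strict_mono_def comp_def)
    qed
    then show ?thesis using True by simp
  next
    case False
    then have "\<not> p g" using g unfolding H_def by auto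
    then have "fsd (2 * l + 1) g = 0" for l
    proof (rule contrapos_pp)
      assume "fsd (2 * l + 1) g \<noteq> 0"
      from fsd_par[OF this] show "\<not> \<not> p g" by simp
    qed
    then show ?thesis using False g by simp
  qed
  show "\<exists>H. subgroup H G \<and> card (rcosets H) = 2
               \<and> (\<forall>i\<in>{1..n}. xg i \<notin> H)
               \<and> (\<forall>g\<in>carrier G. (\<lambda>l. fsd (2 * l) g)
                     \<longlonglongrightarrow> (if g \<in> H then 1 / real (card H) else 0))
               \<and> (\<forall>g\<in>carrier G. (\<lambda>l. fsd (2 * l + 1) g)
                     \<longlonglongrightarrow> (if g \<in> carrier G - H then 1 / real (card (carrier G - H)) else 0))"
    using subH card2 xnot even_lim odd_lim by blast
qed

end

theorem mainTheorem6:
  fixes G :: "('a, 'b) monoid_scheme" and n :: nat and x :: "nat \<Rightarrow> 'a"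
    and \<alpha> :: "int \<Rightarrow> int \<Rightarrow> real" and \<beta> :: "int \<Rightarrow> real"
  assumes grp: "group G" and fin: "finite (carrier G)"
    and n2: "n \<ge> 2"
    and xG: "\<And>i. i \<in> {1..n} \<Longrightarrow> x i \<in> carrier G"
    and gen: "generate G (x ` {1..n}) = carrier G"
    and \<alpha>_pos: "\<And>e' e. e' \<in> sidx n \<Longrightarrow> e \<in> sidx n \<Longrightarrow> e \<noteq> - e' \<Longrightarrow> \<alpha> e' e > 0"
    and \<alpha>_sum: "\<And>e'. e' \<in> sidx n \<Longrightarrow> (\<Sum>e\<in>sidx n - {- e'}. \<alpha> e' e) = 1"
    and \<beta>_pos: "\<And>e. e \<in> sidx n \<Longrightarrow> \<beta> e > 0"
    and \<beta>_sum: "(\<Sum>e\<in>sidx n. \<beta> e) = 1"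
  shows "(nbw_aperiodic G n x \<alpha> \<longrightarrow>
            (\<forall>g\<in>carrier G. (\<lambda>l. nbw_sum_dist G n x \<alpha> \<beta> l g)
                \<longlonglongrightarrow> 1 / real (card (carrier G))))
       \<and> (\<not> nbw_aperiodic G n x \<alpha> \<longrightarrow>
            (\<exists>H. subgroup H G \<and> card (rcosets\<^bsub>G\<^esub> H) = 2
               \<and> (\<forall>i\<in>{1..n}. x i \<notin> H)
               \<and> (\<forall>g\<in>carrier G. (\<lambda>l. nbw_sum_dist G n x \<alpha> \<beta> (2 * l) g)
                     \<longlonglongrightarrow> (if g \<in> H then 1 / real (card H) else 0))
               \<and> (\<forall>g\<in>carrier G. (\<lambda>l. nbw_sum_dist G n x \<alpha> \<beta> (2 * l + 1) g)
                     \<longlonglongrightarrow> (if g \<in> carrier G - H then 1 / real (card (carrier G - H)) else 0))))"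
proof -
  interpret N: nbw G n x \<alpha> \<beta>
    by (rule nbw.intro[OF grp]) (unfold_locales, use assms in auto)
  show ?thesis
  proof (cases "\<exists>M. \<forall>s\<in>N.\<Omega>. \<forall>t\<in>N.\<Omega>. \<forall>l\<ge>M. N.rch l s t")
    case True
    then show ?thesis using N.case_prim by blast
  next
    case False
    then obtain p where "(\<forall>a\<in>carrier G. \<forall>b\<in>carrier G. p (a \<otimes>\<^bsub>G\<^esub> b) = (p a \<noteq> p b))" "\<not> p \<one>\<^bsub>G\<^esub>"
        "(\<forall>i\<in>{1..n}. p (x i))"
        "(\<exists>M. \<forall>s\<in>N.\<Omega>. \<forall>t\<in>N.\<Omega>. \<forall>l\<ge>M. even l \<and> p (fst s) = p (fst t) \<longrightarrow> N.rch l s t)"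
      using N.dichotomy by blast
    from N.case_par[OF this] show ?thesis by blast
  qed
qed



end
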